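(* Let $\alpha\in[0,1)$. The feedback capacity of the POST($\alpha$) channel equals the capacity of the memoryless $Z$ channel with parameter $\alpha$, namely $C_{fb}=-\log_2 c$, where $c=\left(1+\bar\alpha\,\alpha^{\alpha/\bar\alpha}\right)^{-1}$ and $\bar\alpha=1-\alpha$.
   Context: The POST($\alpha$) channel has binary inputs $X_i$ and binary outputs $Y_i$, with the previous output $Y_{i-1}$ serving as channel state (initial state $Y_0=s_0\in\{0,1\}$): if $X_i=Y_{i-1}$ then $Y_i=X_i$; otherwise $Y_i=X_i\oplus Z_i$, where $Z_i$ are i.i.d. Bernoulli($\alpha$) independent of everything else. Equivalently, when $y_{i-1}=0$ it acts as a $Z$ channel ($P(Y=0|X=0)=1$, $P(Y=0|X=1)=\alpha$) and when $y_{i-1}=1$ as the mirror-image $S$ channel ($P(Y=1|X=1)=1$, $P(Y=1|X=0)=\alpha$). Feedback capacity is the operational capacity when the encoder observes all past outputs; $0^0=1$. *)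

theory Defs
  imports Complex_Main
begin

text \<open>Real power with the convention 0^0 = 1 (Isabelle's powr has 0 powr 0 = 0).\<close>
definition pw :: "real \<Rightarrow> real \<Rightarrow> real" where
  "pw x y = (if x = 0 then (if y = 0 then 1 else 0) else x powr y)"

text \<open>POST(alpha) transition probability P(Y_i = y | X_i = x, Y_{i-1} = s).\<close>
definition post_W :: "real \<Rightarrow> bool \<Rightarrow> bool \<Rightarrow> bool \<Rightarrow> real" where
  "post_W \<alpha> s x y =
     (if x = s then (if y = x then 1 else 0)
      else (if y = x then 1 - \<alpha> else \<alpha>))"

fun post_out :: "real \<Rightarrow> bool \<Rightarrow> (bool list \<Rightarrow> bool) \<Rightarrow> bool list \<Rightarrow> bool list \<Rightarrow> real" where
  "post_out \<alpha> s e past [] = 1"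
| "post_out \<alpha> s e past (y # ys) = post_W \<alpha> s (e past) y * post_out \<alpha> y e (past @ [y]) ys"

definition fb_err :: "real \<Rightarrow> bool \<Rightarrow> nat \<Rightarrow> nat \<Rightarrow> (nat \<Rightarrow> bool list \<Rightarrow> bool)
                      \<Rightarrow> (bool list \<Rightarrow> nat) \<Rightarrow> real" where
  "fb_err \<alpha> s0 n M enc dec =
     (1 / real M) * (\<Sum>m<M. \<Sum>ys\<in>{ys :: bool list. length ys = n}.
        (if dec ys \<noteq> m then post_out \<alpha> s0 (enc m) [] ys else 0))"

definition fb_achievable :: "real \<Rightarrow> bool \<Rightarrow> real \<Rightarrow> bool" where
  "fb_achievable \<alpha> s0 R \<longleftrightarrow> R \<ge> 0 \<and>
     (\<forall>\<epsilon>>0. \<exists>N. \<forall>n\<ge>N. \<exists>M enc dec. real M \<ge> 2 powr (real n * R) \<and>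
        fb_err \<alpha> s0 n M enc dec \<le> \<epsilon>)"

definition fb_capacity :: "real \<Rightarrow> bool \<Rightarrow> real" where
  "fb_capacity \<alpha> s0 = Sup {R. fb_achievable \<alpha> s0 R}"

end

theory Submission
  imports Defs "HOL-Library.FuncSet"
begin


lemma exp_quad_neg: fixes x :: real assumes "x \<le> 0" shows "exp x \<le> 1 + x + x\<^sup>2"
proof -
  define y where "y = -x"
  have y: "y \<ge> 0" using assms y_def by simp
  have "exp y = exp (y/2) ^ 2" by (simp add: exp_double[symmetric] power2_eq_square exp_add[symmetric])
  also have "\<dots> \<ge> (1 + y/2)^2" using y by (intro power_mono) (auto intro: exp_ge_add_one_self)
  finally have e: "exp y \<ge> 1 + y + y^2/4" by (simp add: power2_eq_square algebra_simps)
  have pos: "1 + y + y^2/4 > 0" using y by (simp add: add_pos_nonneg)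
  have "exp x = 1 / exp y" by (simp add: y_def exp_minus field_simps)
  also have "\<dots> \<le> 1 / (1 + y + y^2/4)" using e pos by (intro divide_left_mono) auto
  also have "\<dots> \<le> 1 - y + y^2"
  proof -
    have eq: "(1 - y + y^2) * (1 + y + y^2/4) = 1 + y^2/4 + 3*y^3/4 + y^4/4"
      by (simp add: field_simps power2_eq_square power3_eq_cube power4_eq_xxxx)
    have "(1 - y + y^2) * (1 + y + y^2/4) \<ge> 1" unfolding eq using y by simp
    then show ?thesis using pos by (simp add: divide_le_eq mult.commute)
  qed
  finally show ?thesis by (simp add: y_def)
qed

lemma exp_quad: fixes x :: real assumes "\<bar>x\<bar> \<le> 1" shows "exp x \<le> 1 + x + x\<^sup>2"
  using assms exp_bound[of x] exp_quad_neg[of x] by (cases "x \<ge> 0") auto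



definition "aa \<alpha> = pw \<alpha> (\<alpha>/(1-\<alpha>))"
definition "KK \<alpha> = 1 + (1-\<alpha>) * aa \<alpha>"
definition "Zc (\<alpha>::real) v b = (if b then (if v then 1-\<alpha> else \<alpha>) else (if v then 0 else 1))"
definition "qo \<alpha> v = (if v then (1-\<alpha>)*aa \<alpha> / KK \<alpha> else 1 / KK \<alpha>)"
definition "pin \<alpha> b = (if b then aa \<alpha> / KK \<alpha> else 1 - aa \<alpha> / KK \<alpha>)"
definition "ll \<alpha> v b = ln (Zc \<alpha> v b) - ln (qo \<alpha> v)"
definition "zt \<alpha> \<tau> v b = (if Zc \<alpha> v b = 0 then 0 else Zc \<alpha> v b * exp (\<tau> * ll \<alpha> v b))"
definition "BB \<alpha> = 1 + (\<Sum>v\<in>UNIV. \<Sum>b\<in>UNIV. (ll \<alpha> v b)^2)"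

context fixes \<alpha> :: real assumes a0: "0 \<le> \<alpha>" and a1: "\<alpha> < 1"
begin

lemma aa_pos: "0 < aa \<alpha>" and aa_le1: "aa \<alpha> \<le> 1"
  using a0 a1 by (auto simp: aa_def pw_def powr_le1)

lemma aa_ln: "\<alpha> > 0 \<Longrightarrow> ln (aa \<alpha>) = \<alpha>/(1-\<alpha>) * ln \<alpha>"
  by (simp add: aa_def pw_def ln_powr)

lemma KK_gt1: "KK \<alpha> > 1"
  using aa_pos a1 by (simp add: KK_def)

lemma qo_pos: "0 < qo \<alpha> v"
  using aa_pos a1 KK_gt1 by (simp add: qo_def)

lemma Zc_nonneg: "0 \<le> Zc \<alpha> v b" and Zc_le1: "Zc \<alpha> v b \<le> 1"
  using a0 a1 by (auto simp: Zc_def)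

lemma Zc_sum: "(\<Sum>v\<in>UNIV. Zc \<alpha> v b) = 1"
  by (simp add: Zc_def UNIV_bool)

lemma qo_sum: "(\<Sum>v\<in>UNIV. qo \<alpha> v) = 1"
  using KK_gt1 by (simp add: qo_def UNIV_bool KK_def field_simps)

lemma pin_nonneg: "0 \<le> pin \<alpha> b"
proof -
  have "aa \<alpha> \<le> KK \<alpha>" using aa_le1 KK_gt1 by linarith
  then show ?thesis using aa_pos KK_gt1 by (auto simp: pin_def)
qed

lemma pin_sum: "(\<Sum>b\<in>UNIV. pin \<alpha> b) = 1"
  by (simp add: pin_def UNIV_bool)

lemma pin_out: "(\<Sum>b\<in>UNIV. pin \<alpha> b * Zc \<alpha> v b) = qo \<alpha> v"
proof -
  have K: "KK \<alpha> \<noteq> 0" using KK_gt1 by simp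
  show ?thesis
  proof (cases v)
    case True then show ?thesis by (simp add: pin_def Zc_def qo_def UNIV_bool)
  next
    case False
    have "1 - aa \<alpha> / KK \<alpha> + aa \<alpha> / KK \<alpha> * \<alpha> = (KK \<alpha> - aa \<alpha> + \<alpha> * aa \<alpha>) / KK \<alpha>"
      using K by (simp add: field_simps)
    also have "\<dots> = 1 / KK \<alpha>" by (simp add: KK_def algebra_simps)
    finally show ?thesis using False by (simp add: pin_def Zc_def qo_def UNIV_bool)
  qed
qed

lemma Dsum: "(\<Sum>v\<in>UNIV. if Zc \<alpha> v b = 0 then 0 else Zc \<alpha> v b * ll \<alpha> v b) = ln (KK \<alpha>)"
proof (cases b)
  case False
  then show ?thesis using KK_gt1 by (simp add: UNIV_bool Zc_def ll_def qo_def ln_div)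
next
  case True
  have K: "KK \<alpha> > 0" using KK_gt1 by simp
  have l1: "ln (1-\<alpha>) - ln ((1-\<alpha>)*aa \<alpha>/KK \<alpha>) = ln (KK \<alpha>) - ln (aa \<alpha>)"
    using a1 aa_pos K by (simp add: ln_div ln_mult)
  show ?thesis
  proof (cases "\<alpha> = 0")
    case True
    then show ?thesis using \<open>b\<close> l1 by (simp add: UNIV_bool Zc_def ll_def qo_def aa_def pw_def)
  next
    case False
    then have ap: "\<alpha> > 0" using a0 by simp
    have l0: "ln \<alpha> - ln (1/KK \<alpha>) = ln \<alpha> + ln (KK \<alpha>)" using K by (simp add: ln_div)
    have "(\<Sum>v\<in>UNIV. if Zc \<alpha> v b = 0 then 0 else Zc \<alpha> v b * ll \<alpha> v b)
        = (1-\<alpha>) * (ln (KK \<alpha>) - ln (aa \<alpha>)) + \<alpha> * (ln \<alpha> + ln (KK \<alpha>))"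
      using \<open>b\<close> ap a1 l1 l0 by (simp add: UNIV_bool Zc_def ll_def qo_def)
    also have "\<dots> = ln (KK \<alpha>)" using aa_ln[OF ap] a1 by (simp add: field_simps)
    finally show ?thesis .
  qed
qed

lemma BB_ge1: "BB \<alpha> \<ge> 1"
  unfolding BB_def by (simp add: sum_nonneg)

lemma ll_sq_le: "(ll \<alpha> v b)^2 \<le> BB \<alpha> - 1"
proof -
  have "(ll \<alpha> v b)^2 \<le> (\<Sum>b\<in>UNIV. (ll \<alpha> v b)^2)"
    by (rule member_le_sum) auto
  also have "\<dots> \<le> (\<Sum>v\<in>UNIV. \<Sum>b\<in>UNIV. (ll \<alpha> v b)^2)"
    by (rule member_le_sum[where f = "\<lambda>v. \<Sum>b\<in>UNIV. (ll \<alpha> v b)^2"]) (auto intro: sum_nonneg)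
  finally show ?thesis by (simp add: BB_def)
qed

lemma ll_abs_le: "\<bar>ll \<alpha> v b\<bar> \<le> BB \<alpha>"
proof -
  have s: "(ll \<alpha> v b)^2 \<le> BB \<alpha> - 1" by (rule ll_sq_le)
  show ?thesis
  proof (cases "\<bar>ll \<alpha> v b\<bar> \<le> 1")
    case True then show ?thesis using BB_ge1 by linarith
  next
    case False
    then have "\<bar>ll \<alpha> v b\<bar> * 1 \<le> \<bar>ll \<alpha> v b\<bar> * \<bar>ll \<alpha> v b\<bar>" by (intro mult_left_mono) auto
    then have "\<bar>ll \<alpha> v b\<bar> \<le> \<bar>ll \<alpha> v b\<bar>^2" by (simp add: power2_eq_square)
    then show ?thesis using s by simp
  qed
qed

lemma single: assumes t: "\<bar>\<tau>\<bar> \<le> 1 / BB \<alpha>"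
  shows "(\<Sum>v\<in>UNIV. zt \<alpha> \<tau> v b) \<le> exp (\<tau> * ln (KK \<alpha>) + \<tau>^2 * BB \<alpha>)"
proof -
  have B: "BB \<alpha> \<ge> 1" by (rule BB_ge1)
  have pt: "zt \<alpha> \<tau> v b \<le> (if Zc \<alpha> v b = 0 then 0 else Zc \<alpha> v b * (1 + \<tau> * ll \<alpha> v b)) + Zc \<alpha> v b * \<tau>^2 * BB \<alpha>" for v
  proof (cases "Zc \<alpha> v b = 0")
    case True then show ?thesis by (simp add: zt_def)
  next
    case False
    have "\<bar>\<tau> * ll \<alpha> v b\<bar> \<le> 1 / BB \<alpha> * BB \<alpha>"
      unfolding abs_mult using t ll_abs_le[of v b] by (intro mult_mono) auto
    then have a: "\<bar>\<tau> * ll \<alpha> v b\<bar> \<le> 1" using B by simp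
    have sq: "(\<tau> * ll \<alpha> v b)^2 \<le> \<tau>^2 * BB \<alpha>"
      using ll_sq_le[of v b] by (simp add: power_mult_distrib mult_left_mono)
    have "exp (\<tau> * ll \<alpha> v b) \<le> 1 + \<tau> * ll \<alpha> v b + \<tau>^2 * BB \<alpha>"
      using exp_quad[OF a] sq by linarith
    then have "Zc \<alpha> v b * exp (\<tau> * ll \<alpha> v b) \<le> Zc \<alpha> v b * (1 + \<tau> * ll \<alpha> v b + \<tau>^2 * BB \<alpha>)"
      using Zc_nonneg by (intro mult_left_mono) auto
    then show ?thesis using False by (simp add: zt_def algebra_simps)
  qed
  have "(\<Sum>v\<in>UNIV. zt \<alpha> \<tau> v b) \<le> (\<Sum>v\<in>UNIV. (if Zc \<alpha> v b = 0 then 0 else Zc \<alpha> v b * (1 + \<tau> * ll \<alpha> v b)) + Zc \<alpha> v b * \<tau>^2 * BB \<alpha>)"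
    by (intro sum_mono pt)
  also have "\<dots> = (\<Sum>v\<in>UNIV. Zc \<alpha> v b) + \<tau> * (\<Sum>v\<in>UNIV. if Zc \<alpha> v b = 0 then 0 else Zc \<alpha> v b * ll \<alpha> v b) + (\<Sum>v\<in>UNIV. Zc \<alpha> v b) * \<tau>^2 * BB \<alpha>"
    by (simp add: UNIV_bool algebra_simps)
  also have "\<dots> = 1 + \<tau> * ln (KK \<alpha>) + \<tau>^2 * BB \<alpha>" by (simp add: Zc_sum Dsum)
  also have "\<dots> \<le> exp (\<tau> * ln (KK \<alpha>) + \<tau>^2 * BB \<alpha>)" using exp_ge_add_one_self[of "\<tau> * ln (KK \<alpha>) + \<tau>^2 * BB \<alpha>"] by (simp add: add.assoc)
  finally show ?thesis .
qed

end


fun gout :: "(bool \<Rightarrow> bool \<Rightarrow> bool \<Rightarrow> real) \<Rightarrow> bool \<Rightarrow> (bool list \<Rightarrow> bool) \<Rightarrow> bool list \<Rightarrow> bool list \<Rightarrow> real" where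
  "gout f s e past [] = 1"
| "gout f s e past (y # ys) = f s (e past) y * gout f y e (past @ [y]) ys"

definition "Ln n = {ys :: bool list. length ys = n}"

lemma finite_Ln[simp]: "finite (Ln n)"
  using finite_lists_length_eq[of "UNIV :: bool set" n] by (simp add: Ln_def)

lemma Ln_0: "Ln 0 = {[]}" by (auto simp: Ln_def)

lemma sum_Ln_Suc: "(\<Sum>ys\<in>Ln (Suc n). g ys) = (\<Sum>y\<in>UNIV. \<Sum>ys\<in>Ln n. g (y # ys))"
proof -
  have e: "Ln (Suc n) = (\<lambda>(y, ys). y # ys) ` (UNIV \<times> Ln n)"
    by (auto simp: Ln_def length_Suc_conv image_iff)
  have i: "inj_on (\<lambda>(y, ys). y # ys) (UNIV \<times> Ln n)" by (auto simp: inj_on_def)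
  show ?thesis unfolding e sum.reindex[OF i] sum.cartesian_product by (simp add: o_def case_prod_unfold)
qed

lemma bool_shift: "(\<Sum>y\<in>UNIV. h (y \<noteq> (s::bool))) = (\<Sum>v\<in>UNIV. h v)"
  by (cases s) (simp_all add: UNIV_bool add.commute)

lemma post_out_gout: "post_out \<alpha> s e past ys = gout (post_W \<alpha>) s e past ys"
  by (induction ys arbitrary: s past) auto

lemma post_W_Zc: "post_W \<alpha> s x y = Zc \<alpha> (y \<noteq> s) (x \<noteq> s)"
  by (cases s; cases x; cases y) (auto simp: post_W_def Zc_def)

lemma gout_nonneg: "(\<And>s x y. 0 \<le> f s x y) \<Longrightarrow> 0 \<le> gout f s e past ys"
  by (induction ys arbitrary: s past) auto

lemma gout_sum_le:
  assumes "\<And>s x y. 0 \<le> f s x y" and "\<And>s x. (\<Sum>y\<in>UNIV. f s x y) \<le> G"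
  shows "(\<Sum>ys\<in>Ln n. gout f s e past ys) \<le> G ^ n"
proof (induction n arbitrary: s past)
  case 0 then show ?case by (simp add: Ln_0)
next
  case (Suc n)
  have "(\<Sum>ys\<in>Ln (Suc n). gout f s e past ys) = (\<Sum>y\<in>UNIV. f s (e past) y * (\<Sum>ys\<in>Ln n. gout f y e (past @ [y]) ys))"
    by (simp add: sum_Ln_Suc sum_distrib_left)
  also have "\<dots> \<le> (\<Sum>y\<in>UNIV. f s (e past) y * G ^ n)"
    by (intro sum_mono mult_left_mono Suc assms(1))
  also have "\<dots> = (\<Sum>y\<in>UNIV. f s (e past) y) * G ^ n" by (simp add: sum_distrib_right)
  also have "\<dots> \<le> G * G ^ n"
  proof (rule mult_right_mono)
    show "0 \<le> G ^ n"
    proof -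
      have "0 \<le> (\<Sum>y\<in>UNIV. f s (e past) y)" by (intro sum_nonneg assms(1))
      then have "0 \<le> G" using assms(2)[of s "e past"] by linarith
      then show ?thesis by simp
    qed
  qed (rule assms(2))
  finally show ?case by simp
qed

lemma gout_sum_eq:
  assumes "\<And>s x. (\<Sum>y\<in>UNIV. f s x y) = 1"
  shows "(\<Sum>ys\<in>Ln n. gout f s e past ys) = 1"
proof (induction n arbitrary: s past)
  case 0 then show ?case by (simp add: Ln_0)
next
  case (Suc n)
  have "(\<Sum>ys\<in>Ln (Suc n). gout f s e past ys) = (\<Sum>y\<in>UNIV. f s (e past) y * (\<Sum>ys\<in>Ln n. gout f y e (past @ [y]) ys))"
    by (simp add: sum_Ln_Suc sum_distrib_left)
  also have "\<dots> = (\<Sum>y\<in>UNIV. f s (e past) y)" using Suc by simp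
  finally show ?case using assms by simp
qed

fun Qn :: "real \<Rightarrow> bool \<Rightarrow> bool list \<Rightarrow> real" where
  "Qn \<alpha> s [] = 1"
| "Qn \<alpha> s (y # ys) = qo \<alpha> (y \<noteq> s) * Qn \<alpha> y ys"

lemma gout_Qn: "gout (\<lambda>s x y. qo \<alpha> (y \<noteq> s)) s e past ys = Qn \<alpha> s ys"
  by (induction ys arbitrary: s past) auto

lemma Qn_pos: "0 \<le> \<alpha> \<Longrightarrow> \<alpha> < 1 \<Longrightarrow> 0 < Qn \<alpha> s ys"
  by (induction ys arbitrary: s) (auto simp: qo_pos)

lemma ln_mult_pos: "(a::real) > 0 \<Longrightarrow> b > 0 \<Longrightarrow> ln (a*b) = ln a + ln b" by (simp add: ln_mult)

lemma gout_tilt: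
  assumes a0: "0 \<le> \<alpha>" and a1: "\<alpha> < 1"
  shows "gout (\<lambda>s x y. zt \<alpha> \<tau> (y \<noteq> s) (x \<noteq> s)) s e past ys =
     (let P = gout (post_W \<alpha>) s e past ys in
      if P = 0 then 0 else P * exp (\<tau> * (ln P - ln (Qn \<alpha> s ys))))"
proof (induction ys arbitrary: s past)
  case Nil then show ?case by simp
next
  case (Cons y ys)
  define w where "w = Zc \<alpha> (y \<noteq> s) (e past \<noteq> s)"
  define r where "r = gout (post_W \<alpha>) y e (past @ [y]) ys"
  define Q where "Q = Qn \<alpha> y ys"
  define q where "q = qo \<alpha> (y \<noteq> s)"
  have w0: "w \<ge> 0" unfolding w_def using Zc_nonneg[OF a0 a1] by simp
  have r0: "r \<ge> 0" unfolding r_def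
    by (rule gout_nonneg) (simp add: post_W_Zc Zc_nonneg[OF a0 a1])
  have Q0: "Q > 0" unfolding Q_def using Qn_pos[OF a0 a1] by simp
  have q0: "q > 0" unfolding q_def using qo_pos[OF a0 a1] by simp
  have IH: "gout (\<lambda>s x y. zt \<alpha> \<tau> (y \<noteq> s) (x \<noteq> s)) y e (past @ [y]) ys =
     (if r = 0 then 0 else r * exp (\<tau> * (ln r - ln Q)))"
    using Cons.IH[of y "past @ [y]"] by (simp add: r_def Q_def Let_def)
  have L: "gout (\<lambda>s x y. zt \<alpha> \<tau> (y \<noteq> s) (x \<noteq> s)) s e past (y # ys) =
      (if w = 0 then 0 else w * exp (\<tau> * (ln w - ln q))) * (if r = 0 then 0 else r * exp (\<tau> * (ln r - ln Q)))"
    using IH by (simp add: zt_def w_def q_def ll_def)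
  have R: "gout (post_W \<alpha>) s e past (y # ys) = w * r" by (simp add: r_def w_def post_W_Zc)
  have Qs: "Qn \<alpha> s (y # ys) = q * Q" by (simp add: q_def Q_def)
  show ?case
  proof (cases "w = 0 \<or> r = 0")
    case True then show ?thesis using L R by auto
  next
    case False
    then have wp: "w > 0" and rp: "r > 0" using w0 r0 by auto
    have "ln (w*r) - ln (q*Q) = (ln w - ln q) + (ln r - ln Q)"
      using wp rp q0 Q0 by (simp add: ln_mult)
    then show ?thesis using L R Qs False wp rp
      by (simp add: Let_def exp_add[symmetric] distrib_left)
  qed
qed



lemma zt_nonneg: "0 \<le> \<alpha> \<Longrightarrow> \<alpha> < 1 \<Longrightarrow> 0 \<le> zt \<alpha> \<tau> v b"
  using Zc_nonneg[of \<alpha> v b] by (simp add: zt_def)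

lemma converse_bound:
  assumes a0: "0 \<le> \<alpha>" and a1: "\<alpha> < 1" and M: "M > 0" and g: "\<gamma> > 0"
    and s0: "0 \<le> s" and s1: "s \<le> 1 / BB \<alpha>"
  shows "1 - fb_err \<alpha> s0 n M enc dec \<le> \<gamma> / M + exp (- s * ln \<gamma>) * exp (n * (s * ln (KK \<alpha>) + s^2 * BB \<alpha>))"
proof -
  define P where "P m y = gout (post_W \<alpha>) s0 (enc m) [] y" for m y
  define Q where "Q y = Qn \<alpha> s0 y" for y
  define T where "T m y = gout (\<lambda>st x y. zt \<alpha> s (y \<noteq> st) (x \<noteq> st)) s0 (enc m) [] y" for m y
  define E where "E = exp (- s * ln \<gamma>)"
  define G where "G = exp (s * ln (KK \<alpha>) + s^2 * BB \<alpha>)"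
  have Lset: "{ys :: bool list. length ys = n} = Ln n" by (simp add: Ln_def)
  have Wsum: "(\<Sum>y\<in>UNIV. post_W \<alpha> s x y) = 1" for s x
    using bool_shift[of "\<lambda>v. Zc \<alpha> v (x \<noteq> s)" s] by (simp add: post_W_Zc Zc_sum[OF a0 a1])
  have sumP: "(\<Sum>y\<in>Ln n. P m y) = 1" for m
    unfolding P_def by (rule gout_sum_eq[OF Wsum])
  have sumQ: "(\<Sum>y\<in>Ln n. Q y) = 1"
  proof -
    have "(\<Sum>y\<in>Ln n. gout (\<lambda>s x y. qo \<alpha> (y \<noteq> s)) s0 (\<lambda>_. False) [] y) = 1"
    proof (rule gout_sum_eq)
      show "(\<Sum>y\<in>UNIV. qo \<alpha> (y \<noteq> st)) = 1" for st :: bool and x :: bool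
        unfolding bool_shift[of "qo \<alpha>" st] by (rule qo_sum[OF a0 a1])
    qed
    then show ?thesis by (simp only: Q_def gout_Qn)
  qed
  have P0: "P m y \<ge> 0" for m y unfolding P_def
    by (rule gout_nonneg) (simp add: post_W_Zc Zc_nonneg[OF a0 a1])
  have Q0: "Q y > 0" for y unfolding Q_def using Qn_pos[OF a0 a1] by simp
  have T0: "T m y \<ge> 0" for m y unfolding T_def
    by (rule gout_nonneg) (simp add: zt_nonneg[OF a0 a1])
  have Tform: "T m y = (if P m y = 0 then 0 else P m y * exp (s * (ln (P m y) - ln (Q y))))" for m y
    unfolding T_def P_def Q_def using gout_tilt[OF a0 a1, of s s0 "enc m" "[]" y] by (simp add: Let_def)
  have sumT: "(\<Sum>y\<in>Ln n. T m y) \<le> G ^ n" for m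
    unfolding T_def
  proof (rule gout_sum_le)
    show "0 \<le> zt \<alpha> s (y \<noteq> sa) (x \<noteq> sa)" for sa x y :: bool by (rule zt_nonneg[OF a0 a1])
    show "(\<Sum>y\<in>UNIV. zt \<alpha> s (y \<noteq> sa) (x \<noteq> sa)) \<le> G" for sa x :: bool
      using bool_shift[of "\<lambda>v. zt \<alpha> s v (x \<noteq> sa)" sa] single[OF a0 a1, of s "x \<noteq> sa"] s0 s1
      by (simp add: G_def)
  qed
  have err: "fb_err \<alpha> s0 n M enc dec = (1 / M) * (\<Sum>m<M. \<Sum>y\<in>Ln n. if dec y \<noteq> m then P m y else 0)"
    unfolding fb_err_def Lset P_def post_out_gout ..
  have split: "(\<Sum>y\<in>Ln n. if dec y \<noteq> m then P m y else 0) = 1 - (\<Sum>y\<in>Ln n. if dec y = m then P m y else 0)" for m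
  proof -
    have "(\<Sum>y\<in>Ln n. if dec y \<noteq> m then P m y else 0) = (\<Sum>y\<in>Ln n. P m y - (if dec y = m then P m y else 0))"
      by (intro sum.cong) auto
    then show ?thesis by (simp add: sum_subtractf sumP)
  qed
  have one: "1 - fb_err \<alpha> s0 n M enc dec = (1 / M) * (\<Sum>m<M. \<Sum>y\<in>Ln n. if dec y = m then P m y else 0)"
    using M unfolding err split by (simp add: sum_subtractf field_simps)
  have pt: "(if dec y = m then P m y else 0) \<le> (if dec y = m then \<gamma> * Q y else 0) + E * T m y" for m y
  proof -
  have ET: "0 \<le> E * T m y" using T0[of m y] by (simp add: E_def)
  show ?thesis
  proof (cases "dec y = m")
    case False then show ?thesis using ET by simp
  next
    case True
    show ?thesis
    proof (cases "P m y \<le> \<gamma> * Q y")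
      case True then show ?thesis using ET \<open>dec y = m\<close> by simp
    next
      case False
      then have Pp: "P m y > 0" proof -
        have "\<gamma> * Q y > 0" using g Q0[of y] by simp
        then show ?thesis using False by linarith
      qed
      have "ln (\<gamma> * Q y) < ln (P m y)" using False g Q0[of y] Pp by (intro ln_less_cancel_iff[THEN iffD2]) auto
      then have "ln \<gamma> + ln (Q y) < ln (P m y)" using g Q0[of y] by (simp add: ln_mult)
      then have "0 \<le> s * (ln (P m y) - ln (Q y) - ln \<gamma>)" using s0 by (intro mult_nonneg_nonneg) auto
      then have ex: "0 \<le> - s * ln \<gamma> + s * (ln (P m y) - ln (Q y))" by (simp add: algebra_simps)
      have "E * T m y = P m y * exp (- s * ln \<gamma> + s * (ln (P m y) - ln (Q y)))"
        using Pp by (simp add: Tform E_def exp_add[symmetric])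
      also have "\<dots> \<ge> P m y * 1" using Pp ex by (intro mult_left_mono) auto
      finally show ?thesis using \<open>dec y = m\<close> g Q0[of y]
        by (simp add: add_increasing)
    qed
  qed
  qed
  have "(\<Sum>m<M. \<Sum>y\<in>Ln n. if dec y = m then P m y else 0)
      \<le> (\<Sum>m<M. \<Sum>y\<in>Ln n. (if dec y = m then \<gamma> * Q y else 0) + E * T m y)"
    by (intro sum_mono pt)
  also have "\<dots> = (\<Sum>m<M. \<Sum>y\<in>Ln n. if dec y = m then \<gamma> * Q y else 0) + (\<Sum>m<M. \<Sum>y\<in>Ln n. E * T m y)"
    by (simp add: sum.distrib)
  also have "\<dots> \<le> \<gamma> + E * (M * G ^ n)"
  proof (rule add_mono)
    have "(\<Sum>m<M. \<Sum>y\<in>Ln n. if dec y = m then \<gamma> * Q y else 0) = (\<Sum>y\<in>Ln n. if dec y < M then \<gamma> * Q y else 0)"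
      by (subst sum.swap, intro sum.cong refl, subst sum.delta') auto
    also have "\<dots> \<le> (\<Sum>y\<in>Ln n. \<gamma> * Q y)" using g Q0 by (intro sum_mono) (auto intro: less_imp_le)
    also have "\<dots> = \<gamma>" by (simp add: sum_distrib_left[symmetric] sumQ)
    finally show "(\<Sum>m<M. \<Sum>y\<in>Ln n. if dec y = m then \<gamma> * Q y else 0) \<le> \<gamma>" .
    have E0: "E \<ge> 0" by (simp add: E_def)
    have "(\<Sum>m<M. \<Sum>y\<in>Ln n. E * T m y) = (\<Sum>m<M. E * (\<Sum>y\<in>Ln n. T m y))" by (simp add: sum_distrib_left)
    also have "\<dots> \<le> (\<Sum>m<M. E * G ^ n)" using E0 sumT by (intro sum_mono mult_left_mono) auto
    also have "\<dots> = E * (M * G ^ n)" by simp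
    finally show "(\<Sum>m<M. \<Sum>y\<in>Ln n. E * T m y) \<le> E * (M * G ^ n)" .
  qed
  finally have S: "(\<Sum>m<M. \<Sum>y\<in>Ln n. if dec y = m then P m y else 0) \<le> \<gamma> + E * (M * G ^ n)" .
  have Gn: "G ^ n = exp (n * (s * ln (KK \<alpha>) + s^2 * BB \<alpha>))"
    unfolding G_def by (simp add: exp_of_nat_mult)
  have "1 - fb_err \<alpha> s0 n M enc dec \<le> (1 / M) * (\<gamma> + E * (M * G ^ n))"
    unfolding one using S M by (intro mult_left_mono) auto
  also have "\<dots> = \<gamma> / M + E * G ^ n" using M by (simp add: field_simps)
  finally show ?thesis by (simp add: Gn E_def)
qed



lemma exp_small: assumes c: "(c::real) > 0" shows "\<exists>N. \<forall>n\<ge>N. exp (- (real n * c)) < 1/4"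
proof -
  obtain N :: nat where N: "real N > 4 / c" using reals_Archimedean2 by blast
  have "exp (- (real n * c)) < 1/4" if "n \<ge> N" for n
  proof -
    have "real N * c > 4 / c * c" using N c by (intro mult_strict_right_mono) auto
    then have "real N * c > 4" using c by simp
    moreover have "real n * c \<ge> real N * c" using that c by (intro mult_right_mono) auto
    ultimately have "real n * c > 4" by linarith
    then have "exp (real n * c) > 4" using exp_ge_add_one_self[of "real n * c"] by linarith
    then show ?thesis by (simp add: exp_minus field_simps)
  qed
  then show ?thesis by blast
qed

lemma pow2_exp: "2 powr x = exp (x * ln 2)" by (simp add: powr_def)

lemma converse:
  assumes a0: "0 \<le> \<alpha>" and a1: "\<alpha> < 1" and ach: "fb_achievable \<alpha> s0 R"
  shows "R \<le> log 2 (KK \<alpha>)"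
proof (rule ccontr)
  assume "\<not> R \<le> log 2 (KK \<alpha>)"
  define k where "k = ln (KK \<alpha>)"
  define d where "d = (R - log 2 (KK \<alpha>)) / 2"
  have d: "d > 0" using \<open>\<not> R \<le> _\<close> by (simp add: d_def)
  have Rk: "R * ln 2 = k + 2 * d * ln 2" by (simp add: d_def k_def log_def field_simps)
  define B where "B = BB \<alpha>"
  have B1: "B \<ge> 1" using BB_ge1[OF a0 a1] by (simp add: B_def)
  define s where "s = min (1 / B) (d * ln 2 / (2 * B))"
  have s0: "s > 0" using B1 d by (simp add: s_def)
  have s1: "s \<le> 1 / B" by (simp add: s_def)
  have sB: "s * B \<le> d * ln 2 / 2" using B1 by (simp add: s_def min_def field_simps)
  define c where "c = s * d * ln 2 / 2"
  have c: "c > 0" using s0 d by (simp add: c_def)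
  have dl: "d * ln 2 > 0" using d by simp
  obtain N1 where N1: "\<forall>n\<ge>N1. exp (- (real n * (d * ln 2))) < 1/4" using exp_small[OF dl] by blast
  obtain N2 where N2: "\<forall>n\<ge>N2. exp (- (real n * c)) < 1/4" using exp_small[OF c] by blast
  have A: "\<forall>\<epsilon>>0. \<exists>N. \<forall>n\<ge>N. \<exists>M enc dec. real M \<ge> 2 powr (real n * R) \<and> fb_err \<alpha> s0 n M enc dec \<le> \<epsilon>"
    using ach unfolding fb_achievable_def by blast
  have q: "(1/4::real) > 0" by simp
  obtain N where N: "\<forall>n\<ge>N. \<exists>M enc dec. real M \<ge> 2 powr (real n * R) \<and> fb_err \<alpha> s0 n M enc dec \<le> 1/4"
    using A[rule_format, OF q] by blast
  define n where "n = max N (max N1 N2)"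
  have nN: "n \<ge> N" by (simp add: n_def)
  obtain M enc dec where M: "real M \<ge> 2 powr (real n * R)" and err: "fb_err \<alpha> s0 n M enc dec \<le> 1/4"
    using N nN by blast
  have "0 < 2 powr (real n * R)" by simp
  then have "real M > 0" using M by linarith
  then have Mpos: "M > 0" by simp
  define \<gamma> where "\<gamma> = exp (real n * (k + d * ln 2))"
  have g: "\<gamma> > 0" by (simp add: \<gamma>_def)
  note bound = converse_bound[OF a0 a1 Mpos g less_imp_le[OF s0], of s0 n enc dec]
  have t1: "\<gamma> / M \<le> exp (- (real n * (d * ln 2)))"
  proof -
    have Me: "real M \<ge> exp (real n * R * ln 2)" using M by (simp add: pow2_exp)
    have "\<gamma> / M \<le> \<gamma> / exp (real n * R * ln 2)"
      using Me g \<open>real M > 0\<close> by (intro divide_left_mono) auto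
    also have "\<dots> = exp (real n * (k + d * ln 2) - real n * R * ln 2)" by (simp add: \<gamma>_def exp_diff)
    also have "real n * (k + d * ln 2) - real n * R * ln 2 = - (real n * (d * ln 2))"
    proof -
      have "real n * R * ln 2 = real n * (k + 2 * d * ln 2)" using Rk by (metis mult.assoc)
      then show ?thesis by (simp add: algebra_simps)
    qed
    finally show ?thesis .
  qed
  have t2: "exp (- s * ln \<gamma>) * exp (real n * (s * ln (KK \<alpha>) + s^2 * BB \<alpha>)) \<le> exp (- (real n * c))"
  proof -
    have lg: "ln \<gamma> = real n * (k + d * ln 2)" by (simp add: \<gamma>_def)
    have ar: "- s * (real n * (k + d * ln 2)) + real n * (s * k + s^2 * B) = real n * (- s * d * ln 2 + s * (s * B))"
      by (simp add: algebra_simps power2_eq_square)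
    have "exp (- s * ln \<gamma>) * exp (real n * (s * ln (KK \<alpha>) + s^2 * BB \<alpha>)) = exp (- s * ln \<gamma> + real n * (s * k + s^2 * B))"
      unfolding exp_add k_def B_def ..
    also have "\<dots> = exp (real n * (- s * d * ln 2 + s * (s * B)))" unfolding lg ar ..
    finally have "exp (- s * ln \<gamma>) * exp (real n * (s * ln (KK \<alpha>) + s^2 * BB \<alpha>)) = exp (real n * (- s * d * ln 2 + s * (s * B)))" .
    also have "\<dots> \<le> exp (- (real n * c))"
    proof -
      have "s * (s * B) \<le> s * (d * ln 2 / 2)" using sB s0 by (intro mult_left_mono) auto
      then have "- s * d * ln 2 + s * (s * B) \<le> - c" by (simp add: c_def field_simps)
      then have "real n * (- s * d * ln 2 + s * (s * B)) \<le> real n * (- c)" by (intro mult_left_mono) auto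
      then show ?thesis by simp
    qed
    finally show ?thesis .
  qed
  have e1: "exp (- (real n * (d * ln 2))) < 1/4" using N1 by (simp add: n_def)
  have e2: "exp (- (real n * c)) < 1/4" using N2 by (simp add: n_def)
  have b: "1 - fb_err \<alpha> s0 n M enc dec \<le> \<gamma> / M + exp (- s * ln \<gamma>) * exp (real n * (s * ln (KK \<alpha>) + s^2 * BB \<alpha>))"
    using bound s1 by (simp add: B_def)
  have "1 - fb_err \<alpha> s0 n M enc dec < 1/4 + 1/4"
    using b t1 t2 e1 e2 by linarith
  then show False using err by simp
qed



fun zw :: "(bool \<Rightarrow> bool \<Rightarrow> real) \<Rightarrow> bool \<Rightarrow> bool list \<Rightarrow> bool list \<Rightarrow> real" where
  "zw f s (b # u) (y # ys) = f (y \<noteq> s) b * zw f y u ys"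
| "zw f s _ _ = 1"

definition "Pn \<alpha> u = prod_list (map (pin \<alpha>) u)"

definition "encf s0 u = (\<lambda>past. u ! length past \<noteq> last (s0 # past))"

lemma post_zw:
  "length past + length ys = length u \<Longrightarrow>
   post_out \<alpha> (last (s0 # past)) (encf s0 u) past ys = zw (Zc \<alpha>) (last (s0 # past)) (drop (length past) u) ys"
proof (induction ys arbitrary: past)
  case Nil
  then show ?case by simp
next
  case (Cons y ys)
  have k: "length past < length u" using Cons.prems by simp
  have d: "drop (length past) u = u ! length past # drop (Suc (length past)) u"
    using k by (simp add: Cons_nth_drop_Suc)
  have IH: "post_out \<alpha> y (encf s0 u) (past @ [y]) ys = zw (Zc \<alpha>) y (drop (Suc (length past)) u) ys"
    using Cons.IH[of "past @ [y]"] Cons.prems by simp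
  define st where "st = last (s0 # past)"
  have W: "post_W \<alpha> st (a \<noteq> st) y = Zc \<alpha> (y \<noteq> st) a" for a
    by (cases a; cases st; cases y) (auto simp: post_W_def Zc_def)
  have "post_out \<alpha> st (encf s0 u) past (y # ys) = post_W \<alpha> st (u ! length past \<noteq> st) y * post_out \<alpha> y (encf s0 u) (past @ [y]) ys"
    by (simp add: encf_def st_def)
  also have "\<dots> = Zc \<alpha> (y \<noteq> st) (u ! length past) * zw (Zc \<alpha>) y (drop (Suc (length past)) u) ys"
    unfolding W IH ..
  also have "\<dots> = zw (Zc \<alpha>) st (drop (length past) u) (y # ys)" unfolding d by simp
  finally show ?case by (simp only: st_def)
qed

lemma Ln_Suc_mem: "x # xs \<in> Ln (Suc n) \<longleftrightarrow> xs \<in> Ln n" by (simp add: Ln_def)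

context fixes \<alpha> :: real assumes a0: "0 \<le> \<alpha>" and a1: "\<alpha> < 1"
begin

lemma Pn_nonneg: "0 \<le> Pn \<alpha> u"
  unfolding Pn_def by (induction u) (auto simp: pin_nonneg[OF a0 a1])

lemma Pn_sum: "(\<Sum>u\<in>Ln n. Pn \<alpha> u) = 1"
proof (induction n)
  case 0 then show ?case by (simp add: Ln_0 Pn_def)
next
  case (Suc n)
  have "(\<Sum>u\<in>Ln (Suc n). Pn \<alpha> u) = (\<Sum>b\<in>UNIV. pin \<alpha> b * (\<Sum>u\<in>Ln n. Pn \<alpha> u))"
    by (simp add: sum_Ln_Suc Pn_def sum_distrib_left)
  then show ?case using Suc pin_sum[OF a0 a1] by simp
qed

lemma mix: "length y = n \<Longrightarrow> (\<Sum>u\<in>Ln n. Pn \<alpha> u * zw (Zc \<alpha>) s u y) = Qn \<alpha> s y"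
proof (induction y arbitrary: n s)
  case Nil then show ?case by (simp add: Ln_0 Pn_def)
next
  case (Cons y ys)
  then obtain k where n: "n = Suc k" and k: "length ys = k" by auto
  have "(\<Sum>u\<in>Ln n. Pn \<alpha> u * zw (Zc \<alpha>) s u (y # ys))
      = (\<Sum>b\<in>UNIV. pin \<alpha> b * Zc \<alpha> (y \<noteq> s) b * (\<Sum>u\<in>Ln k. Pn \<alpha> u * zw (Zc \<alpha>) y u ys))"
    by (simp add: n sum_Ln_Suc Pn_def sum_distrib_left mult_ac)
  also have "\<dots> = (\<Sum>b\<in>UNIV. pin \<alpha> b * Zc \<alpha> (y \<noteq> s) b) * Qn \<alpha> y ys"
    using Cons.IH[OF k] by (simp add: sum_distrib_right)
  also have "\<dots> = Qn \<alpha> s (y # ys)" by (simp add: pin_out[OF a0 a1])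
  finally show ?case .
qed

lemma joint: "(\<Sum>u\<in>Ln n. \<Sum>y\<in>Ln n. Pn \<alpha> u * zw f s u y) = (\<Sum>b\<in>UNIV. \<Sum>v\<in>UNIV. pin \<alpha> b * f v b) ^ n"
proof (induction n arbitrary: s)
  case 0 then show ?case by (simp add: Ln_0 Pn_def)
next
  case (Suc n)
  define F where "F = (\<Sum>b\<in>UNIV. \<Sum>v\<in>UNIV. pin \<alpha> b * f v b)"
  have e1: "(\<Sum>u\<in>Ln (Suc n). \<Sum>y\<in>Ln (Suc n). Pn \<alpha> u * zw f s u y)
      = (\<Sum>b\<in>UNIV. \<Sum>u\<in>Ln n. \<Sum>y1\<in>UNIV. \<Sum>ys\<in>Ln n. pin \<alpha> b * f (y1 \<noteq> s) b * (Pn \<alpha> u * zw f y1 u ys))"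
    by (simp add: sum_Ln_Suc Pn_def mult_ac)
  have e2: "(\<Sum>u\<in>Ln n. \<Sum>y1\<in>UNIV. \<Sum>ys\<in>Ln n. pin \<alpha> b * f (y1 \<noteq> s) b * (Pn \<alpha> u * zw f y1 u ys))
      = (\<Sum>y1\<in>UNIV. pin \<alpha> b * f (y1 \<noteq> s) b * F ^ n)" for b
  proof -
    have "(\<Sum>u\<in>Ln n. \<Sum>y1\<in>UNIV. \<Sum>ys\<in>Ln n. pin \<alpha> b * f (y1 \<noteq> s) b * (Pn \<alpha> u * zw f y1 u ys))
       = (\<Sum>y1\<in>UNIV. \<Sum>u\<in>Ln n. \<Sum>ys\<in>Ln n. pin \<alpha> b * f (y1 \<noteq> s) b * (Pn \<alpha> u * zw f y1 u ys))"
      by (rule sum.swap)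
    also have "\<dots> = (\<Sum>y1\<in>UNIV. pin \<alpha> b * f (y1 \<noteq> s) b * (\<Sum>u\<in>Ln n. \<Sum>ys\<in>Ln n. Pn \<alpha> u * zw f y1 u ys))"
      by (simp only: sum_distrib_left)
    also have "\<dots> = (\<Sum>y1\<in>UNIV. pin \<alpha> b * f (y1 \<noteq> s) b * F ^ n)"
      using Suc by (simp add: F_def)
    finally show ?thesis .
  qed
  have "(\<Sum>u\<in>Ln (Suc n). \<Sum>y\<in>Ln (Suc n). Pn \<alpha> u * zw f s u y)
      = (\<Sum>b\<in>UNIV. \<Sum>y\<in>UNIV. pin \<alpha> b * f (y \<noteq> s) b) * F ^ n"
    unfolding e1 e2 by (simp add: sum_distrib_right)
  also have "(\<Sum>b\<in>UNIV. \<Sum>y\<in>UNIV. pin \<alpha> b * f (y \<noteq> s) b) = F"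
    unfolding F_def
  proof (rule sum.cong[OF refl])
    fix b show "(\<Sum>y\<in>UNIV. pin \<alpha> b * f (y \<noteq> s) b) = (\<Sum>v\<in>UNIV. pin \<alpha> b * f v b)"
      by (rule bool_shift[of "\<lambda>v. pin \<alpha> b * f v b" s])
  qed
  finally show ?case by (simp add: F_def)
qed

lemma zw_sum: "length u = n \<Longrightarrow> (\<Sum>y\<in>Ln n. zw (Zc \<alpha>) s u y) = 1"
proof (induction u arbitrary: n s)
  case Nil then show ?case by (simp add: Ln_0)
next
  case (Cons b u)
  then obtain k where n: "n = Suc k" and k: "length u = k" by auto
  have "(\<Sum>y\<in>Ln n. zw (Zc \<alpha>) s (b # u) y) = (\<Sum>y\<in>UNIV. Zc \<alpha> (y \<noteq> s) b * (\<Sum>ys\<in>Ln k. zw (Zc \<alpha>) y u ys))"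
    by (simp add: n sum_Ln_Suc sum_distrib_left)
  also have "\<dots> = (\<Sum>y\<in>UNIV. Zc \<alpha> (y \<noteq> s) b)" using Cons.IH[OF k] by simp
  also have "\<dots> = 1" using bool_shift[of "\<lambda>v. Zc \<alpha> v b" s] Zc_sum[OF a0 a1] by simp
  finally show ?case .
qed

lemma zw_nonneg: "0 \<le> zw (Zc \<alpha>) s u y"
  by (induction "Zc \<alpha>" s u y rule: zw.induct) (auto simp: Zc_nonneg[OF a0 a1])

lemma zw_tilt: "length u = length y \<Longrightarrow> zw (zt \<alpha> \<tau>) s u y =
     (let P = zw (Zc \<alpha>) s u y in if P = 0 then 0 else P * exp (\<tau> * (ln P - ln (Qn \<alpha> s y))))"
proof (induction u arbitrary: s y)
  case Nil then show ?case by simp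
next
  case (Cons b u)
  then obtain y1 ys where y: "y = y1 # ys" and l: "length u = length ys" by (cases y) auto
  define w where "w = Zc \<alpha> (y1 \<noteq> s) b"
  define r where "r = zw (Zc \<alpha>) y1 u ys"
  define Q where "Q = Qn \<alpha> y1 ys"
  define q where "q = qo \<alpha> (y1 \<noteq> s)"
  have w0: "w \<ge> 0" unfolding w_def using Zc_nonneg[OF a0 a1] by simp
  have r0: "r \<ge> 0" unfolding r_def by (rule zw_nonneg)
  have Q0: "Q > 0" unfolding Q_def using Qn_pos[OF a0 a1] by simp
  have q0: "q > 0" unfolding q_def using qo_pos[OF a0 a1] by simp
  have IH: "zw (zt \<alpha> \<tau>) y1 u ys = (if r = 0 then 0 else r * exp (\<tau> * (ln r - ln Q)))"
    using Cons.IH[OF l, of y1] by (simp add: r_def Q_def Let_def)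
  have L: "zw (zt \<alpha> \<tau>) s (b # u) y =
      (if w = 0 then 0 else w * exp (\<tau> * (ln w - ln q))) * (if r = 0 then 0 else r * exp (\<tau> * (ln r - ln Q)))"
    using IH by (simp add: y zt_def w_def q_def ll_def)
  have R: "zw (Zc \<alpha>) s (b # u) y = w * r" by (simp add: y r_def w_def)
  have Qs: "Qn \<alpha> s y = q * Q" by (simp add: y q_def Q_def)
  show ?case
  proof (cases "w = 0 \<or> r = 0")
    case True then show ?thesis using L R by auto
  next
    case False
    then have wp: "w > 0" and rp: "r > 0" using w0 r0 by auto
    have "ln (w*r) - ln (q*Q) = (ln w - ln q) + (ln r - ln Q)"
      using wp rp q0 Q0 by (simp add: ln_mult)
    then show ?thesis using L R Qs False wp rp
      by (simp add: Let_def exp_add[symmetric] distrib_left)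
  qed
qed

end


lemma sum_PiE_prod:
  fixes g :: "'a \<Rightarrow> 'b \<Rightarrow> real"
  assumes "finite I" "finite S"
  shows "(\<Sum>c\<in>PiE I (\<lambda>_. S). \<Prod>i\<in>I. g i (c i)) = (\<Prod>i\<in>I. \<Sum>u\<in>S. g i u)"
  using prod_sum_PiE[of I "\<lambda>_. S" g] assms by simp

lemma marg1:
  fixes w :: "'b \<Rightarrow> real"
  assumes I: "finite I" and S: "finite S" and w1: "(\<Sum>u\<in>S. w u) = 1" and j: "j \<in> I"
  shows "(\<Sum>c\<in>PiE I (\<lambda>_. S). (\<Prod>i\<in>I. w (c i)) * A (c j)) = (\<Sum>u\<in>S. w u * A u)"
proof -
  define g where "g i u = (if i = j then w u * A u else w u)" for i u
  have pc: "(\<Prod>i\<in>I. w (c i)) * A (c j) = (\<Prod>i\<in>I. g i (c i))" for c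
  proof -
    have "(\<Prod>i\<in>I. g i (c i)) = g j (c j) * (\<Prod>i\<in>I - {j}. g i (c i))" using I j by (rule prod.remove)
    also have "(\<Prod>i\<in>I - {j}. g i (c i)) = (\<Prod>i\<in>I - {j}. w (c i))" by (intro prod.cong) (auto simp: g_def)
    also have "(\<Prod>i\<in>I. w (c i)) = w (c j) * (\<Prod>i\<in>I - {j}. w (c i))" using I j by (rule prod.remove)
    ultimately show ?thesis by (simp add: g_def)
  qed
  have "(\<Sum>c\<in>PiE I (\<lambda>_. S). (\<Prod>i\<in>I. w (c i)) * A (c j)) = (\<Prod>i\<in>I. \<Sum>u\<in>S. g i u)"
    unfolding pc by (rule sum_PiE_prod[OF I S])
  also have "\<dots> = (\<Sum>u\<in>S. g j u) * (\<Prod>i\<in>I - {j}. \<Sum>u\<in>S. g i u)" using I j by (rule prod.remove)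
  also have "(\<Prod>i\<in>I - {j}. \<Sum>u\<in>S. g i u) = 1" using w1 by (intro prod.neutral) (auto simp: g_def)
  finally show ?thesis by (simp add: g_def)
qed

lemma marg2:
  fixes w :: "'b \<Rightarrow> real"
  assumes I: "finite I" and S: "finite S" and w1: "(\<Sum>u\<in>S. w u) = 1" and j: "j \<in> I" and k: "k \<in> I" and jk: "j \<noteq> k"
  shows "(\<Sum>c\<in>PiE I (\<lambda>_. S). (\<Prod>i\<in>I. w (c i)) * A (c j) * B (c k)) = (\<Sum>u\<in>S. w u * A u) * (\<Sum>u\<in>S. w u * B u)"
proof -
  define g where "g i u = (if i = j then w u * A u else if i = k then w u * B u else w u)" for i u
  have k': "k \<in> I - {j}" using k jk by simp
  have I': "finite (I - {j})" using I by simp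
  have pc: "(\<Prod>i\<in>I. w (c i)) * A (c j) * B (c k) = (\<Prod>i\<in>I. g i (c i))" for c
  proof -
    have "(\<Prod>i\<in>I. g i (c i)) = g j (c j) * (g k (c k) * (\<Prod>i\<in>I - {j} - {k}. g i (c i)))"
      using prod.remove[OF I j, of "\<lambda>i. g i (c i)"] prod.remove[OF I' k', of "\<lambda>i. g i (c i)"] by simp
    also have "(\<Prod>i\<in>I - {j} - {k}. g i (c i)) = (\<Prod>i\<in>I - {j} - {k}. w (c i))" by (intro prod.cong) (auto simp: g_def)
    also have "(\<Prod>i\<in>I. w (c i)) = w (c j) * (w (c k) * (\<Prod>i\<in>I - {j} - {k}. w (c i)))"
      using prod.remove[OF I j, of "\<lambda>i. w (c i)"] prod.remove[OF I' k', of "\<lambda>i. w (c i)"] by simp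
    ultimately show ?thesis using jk by (simp add: g_def mult_ac)
  qed
  have "(\<Sum>c\<in>PiE I (\<lambda>_. S). (\<Prod>i\<in>I. w (c i)) * A (c j) * B (c k)) = (\<Prod>i\<in>I. \<Sum>u\<in>S. g i u)"
    unfolding pc by (rule sum_PiE_prod[OF I S])
  also have "\<dots> = (\<Sum>u\<in>S. g j u) * ((\<Sum>u\<in>S. g k u) * (\<Prod>i\<in>I - {j} - {k}. \<Sum>u\<in>S. g i u))"
    using prod.remove[OF I j, of "\<lambda>i. \<Sum>u\<in>S. g i u"] prod.remove[OF I' k', of "\<lambda>i. \<Sum>u\<in>S. g i u"] by simp
  also have "(\<Prod>i\<in>I - {j} - {k}. \<Sum>u\<in>S. g i u) = 1" using w1 by (intro prod.neutral) (auto simp: g_def)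
  finally show ?thesis using jk by (simp add: g_def)
qed

lemma exists_below_avg:
  fixes err cw :: "'c \<Rightarrow> real"
  assumes "finite C" "C \<noteq> {}" "\<And>c. c \<in> C \<Longrightarrow> cw c \<ge> 0" "(\<Sum>c\<in>C. cw c) = 1"
    and "(\<Sum>c\<in>C. cw c * err c) \<le> X"
  shows "\<exists>c\<in>C. err c \<le> X"
proof -
  define m where "m = Min (err ` C)"
  have mC: "m \<in> err ` C" using assms(1,2) by (simp add: m_def)
  have ml: "m \<le> err c" if "c \<in> C" for c using assms(1) that by (simp add: m_def)
  have "m = (\<Sum>c\<in>C. cw c * m)" using assms(4) by (simp add: sum_distrib_right[symmetric])
  also have "\<dots> \<le> (\<Sum>c\<in>C. cw c * err c)" using assms(3) ml by (intro sum_mono mult_left_mono) auto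
  finally show ?thesis using mC assms(5) by force
qed



definition "CB n M = PiE {..<M} (\<lambda>_. Ln n)"
definition "cw \<alpha> M c = (\<Prod>i\<in>{..<M}. Pn \<alpha> (c i))"
definition "tst \<alpha> s0 \<gamma> u y = (\<gamma> * Qn \<alpha> s0 y < zw (Zc \<alpha>) s0 u y)"
definition "dcd \<alpha> s0 \<gamma> M c y = (if \<exists>m<M. tst \<alpha> s0 \<gamma> (c m) y then LEAST m. m < M \<and> tst \<alpha> s0 \<gamma> (c m) y else 0)"
definition "Aterm \<alpha> s0 \<gamma> n = (\<Sum>u\<in>Ln n. Pn \<alpha> u * (\<Sum>y\<in>Ln n. if tst \<alpha> s0 \<gamma> u y then 0 else zw (Zc \<alpha>) s0 u y))"

context fixes \<alpha> :: real and s0 :: bool and n M :: nat and \<gamma> :: real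
  assumes a0: "0 \<le> \<alpha>" and a1: "\<alpha> < 1" and M: "M > 0" and g: "\<gamma> > 0"
begin

lemma CB_fin: "finite (CB n M)" unfolding CB_def by (intro finite_PiE) auto
lemma CB_ne: "CB n M \<noteq> {}" unfolding CB_def
  by (simp add: PiE_eq_empty_iff Ln_def) (metis length_replicate)
lemma cw_nonneg: "0 \<le> cw \<alpha> M c" unfolding cw_def by (intro prod_nonneg) (simp add: Pn_nonneg[OF a0 a1])
lemma cw_sum: "(\<Sum>c\<in>CB n M. cw \<alpha> M c) = 1"
  using marg1[of "{..<M}" "Ln n" "Pn \<alpha>" 0 "\<lambda>_. 1"] Pn_sum[OF a0 a1] M
  by (simp add: CB_def cw_def)

lemma err_eq:
  assumes c: "c \<in> CB n M"
  shows "fb_err \<alpha> s0 n M (\<lambda>m. encf s0 (c m)) (dcd \<alpha> s0 \<gamma> M c) =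
    (1 / M) * (\<Sum>m<M. \<Sum>y\<in>Ln n. if dcd \<alpha> s0 \<gamma> M c y \<noteq> m then zw (Zc \<alpha>) s0 (c m) y else 0)"
proof -
  have "post_out \<alpha> s0 (encf s0 (c m)) [] y = zw (Zc \<alpha>) s0 (c m) y" if "m < M" "y \<in> Ln n" for m y
  proof -
    have "c m \<in> Ln n" using c that by (auto simp: CB_def)
    then have "length [] + length y = length (c m)" using that by (simp add: Ln_def)
    from post_zw[OF this, of \<alpha> s0] show ?thesis by simp
  qed
  then show ?thesis unfolding fb_err_def
    by (intro arg_cong2[where f = "(*)"] refl sum.cong) (auto simp: Ln_def)
qed

lemma ind_bound:
  fixes P :: real
  assumes m: "m < M" and P: "P \<ge> 0"
  shows "(if dcd \<alpha> s0 \<gamma> M c y \<noteq> m then P else 0) \<le>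
    (if tst \<alpha> s0 \<gamma> (c m) y then 0 else P) + (\<Sum>m'\<in>{..<M} - {m}. if tst \<alpha> s0 \<gamma> (c m') y then P else 0)"
proof -
  have S0: "0 \<le> (\<Sum>m'\<in>{..<M} - {m}. if tst \<alpha> s0 \<gamma> (c m') y then P else 0)" using P by (intro sum_nonneg) auto
  show ?thesis
  proof (cases "dcd \<alpha> s0 \<gamma> M c y \<noteq> m \<and> tst \<alpha> s0 \<gamma> (c m) y")
    case False
    then show ?thesis using S0 P by auto
  next
    case True
    then have ex: "\<exists>m<M. tst \<alpha> s0 \<gamma> (c m) y" using m by blast
    define l where "l = (LEAST m. m < M \<and> tst \<alpha> s0 \<gamma> (c m) y)"
    have l: "l < M \<and> tst \<alpha> s0 \<gamma> (c l) y" unfolding l_def using ex by (metis (mono_tags, lifting) LeastI)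
    have "dcd \<alpha> s0 \<gamma> M c y = l" using ex by (simp add: dcd_def l_def)
    then have lm: "l \<in> {..<M} - {m}" using l True by auto
    have "P = (if tst \<alpha> s0 \<gamma> (c l) y then P else 0)" using l by simp
    also have "\<dots> \<le> (\<Sum>m'\<in>{..<M} - {m}. if tst \<alpha> s0 \<gamma> (c m') y then P else 0)"
      using lm P by (intro member_le_sum[where f = "\<lambda>m'. if tst \<alpha> s0 \<gamma> (c m') y then P else 0"]) auto
    finally show ?thesis using True by simp
  qed
qed

lemma term1: assumes m: "m < M"
  shows "(\<Sum>c\<in>CB n M. cw \<alpha> M c * (\<Sum>y\<in>Ln n. if tst \<alpha> s0 \<gamma> (c m) y then 0 else zw (Zc \<alpha>) s0 (c m) y)) = Aterm \<alpha> s0 \<gamma> n"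
  using marg1[of "{..<M}" "Ln n" "Pn \<alpha>" m "\<lambda>u. \<Sum>y\<in>Ln n. if tst \<alpha> s0 \<gamma> u y then 0 else zw (Zc \<alpha>) s0 u y"] Pn_sum[OF a0 a1] m
  by (simp add: CB_def cw_def Aterm_def)

lemma term2: assumes m: "m < M" and m': "m' < M" and mm: "m \<noteq> m'"
  shows "(\<Sum>c\<in>CB n M. cw \<alpha> M c * (\<Sum>y\<in>Ln n. if tst \<alpha> s0 \<gamma> (c m') y then zw (Zc \<alpha>) s0 (c m) y else 0)) \<le> 1 / \<gamma>"
proof -
  define ind where "ind u y = (if tst \<alpha> s0 \<gamma> u y then 1 else (0::real))" for u y
  have "(\<Sum>c\<in>CB n M. cw \<alpha> M c * (\<Sum>y\<in>Ln n. if tst \<alpha> s0 \<gamma> (c m') y then zw (Zc \<alpha>) s0 (c m) y else 0))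
      = (\<Sum>c\<in>CB n M. \<Sum>y\<in>Ln n. cw \<alpha> M c * zw (Zc \<alpha>) s0 (c m) y * ind (c m') y)"
    unfolding sum_distrib_left by (intro sum.cong refl) (simp add: ind_def)
  also have "\<dots> = (\<Sum>y\<in>Ln n. \<Sum>c\<in>CB n M. cw \<alpha> M c * zw (Zc \<alpha>) s0 (c m) y * ind (c m') y)"
    by (rule sum.swap)
  also have "\<dots> = (\<Sum>y\<in>Ln n. (\<Sum>u\<in>Ln n. Pn \<alpha> u * zw (Zc \<alpha>) s0 u y) * (\<Sum>u\<in>Ln n. Pn \<alpha> u * ind u y))"
    unfolding CB_def cw_def
    by (intro sum.cong refl marg2) (auto simp: Pn_sum[OF a0 a1] m m' mm)
  also have "\<dots> = (\<Sum>y\<in>Ln n. Qn \<alpha> s0 y * (\<Sum>u\<in>Ln n. Pn \<alpha> u * ind u y))"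
  proof (intro sum.cong refl)
    fix y assume "y \<in> Ln n"
    then have "length y = n" by (simp add: Ln_def)
    then show "(\<Sum>u\<in>Ln n. Pn \<alpha> u * zw (Zc \<alpha>) s0 u y) * (\<Sum>u\<in>Ln n. Pn \<alpha> u * ind u y) = Qn \<alpha> s0 y * (\<Sum>u\<in>Ln n. Pn \<alpha> u * ind u y)"
      by (simp add: mix[OF a0 a1])
  qed
  also have "\<dots> = (\<Sum>y\<in>Ln n. \<Sum>u\<in>Ln n. Pn \<alpha> u * (Qn \<alpha> s0 y * ind u y))"
    unfolding sum_distrib_left by (intro sum.cong refl) (simp add: mult_ac)
  also have "\<dots> = (\<Sum>u\<in>Ln n. \<Sum>y\<in>Ln n. Pn \<alpha> u * (Qn \<alpha> s0 y * ind u y))"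
    by (rule sum.swap)
  also have "\<dots> = (\<Sum>u\<in>Ln n. Pn \<alpha> u * (\<Sum>y\<in>Ln n. Qn \<alpha> s0 y * ind u y))"
    by (simp only: sum_distrib_left)
  also have "\<dots> \<le> (\<Sum>u\<in>Ln n. Pn \<alpha> u * (\<Sum>y\<in>Ln n. zw (Zc \<alpha>) s0 u y / \<gamma>))"
  proof (intro sum_mono mult_left_mono Pn_nonneg[OF a0 a1])
    fix u y
    show "Qn \<alpha> s0 y * ind u y \<le> zw (Zc \<alpha>) s0 u y / \<gamma>"
      using g zw_nonneg[OF a0 a1, of s0 u y] by (auto simp: ind_def tst_def field_simps)
  qed
  also have "\<dots> = (\<Sum>u\<in>Ln n. Pn \<alpha> u * (1 / \<gamma>))"
  proof (intro sum.cong refl)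
    fix u assume "u \<in> Ln n"
    then have "length u = n" by (simp add: Ln_def)
    then show "Pn \<alpha> u * (\<Sum>y\<in>Ln n. zw (Zc \<alpha>) s0 u y / \<gamma>) = Pn \<alpha> u * (1 / \<gamma>)"
      by (simp add: sum_divide_distrib[symmetric] zw_sum[OF a0 a1])
  qed
  also have "\<dots> = 1 / \<gamma>" by (simp add: sum_divide_distrib[symmetric] Pn_sum[OF a0 a1])
  finally show ?thesis .
qed

end


context fixes \<alpha> :: real and s0 :: bool and n M :: nat and \<gamma> :: real
  assumes a0: "0 \<le> \<alpha>" and a1: "\<alpha> < 1" and M: "M > 0" and g: "\<gamma> > 0"
begin

lemma avg_bound:
  "(\<Sum>c\<in>CB n M. cw \<alpha> M c * fb_err \<alpha> s0 n M (\<lambda>m. encf s0 (c m)) (dcd \<alpha> s0 \<gamma> M c)) \<le> Aterm \<alpha> s0 \<gamma> n + M / \<gamma>"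
proof -
  define F1 where "F1 (c::nat \<Rightarrow> bool list) (m::nat) = (\<Sum>y\<in>Ln n. if tst \<alpha> s0 \<gamma> (c m) y then 0 else zw (Zc \<alpha>) s0 (c m) y)" for c m
  define F2 where "F2 (c::nat \<Rightarrow> bool list) (m::nat) (m'::nat) = (\<Sum>y\<in>Ln n. if tst \<alpha> s0 \<gamma> (c m') y then zw (Zc \<alpha>) s0 (c m) y else 0)" for c m m'
  have stepA: "(\<Sum>m<M. \<Sum>y\<in>Ln n. if dcd \<alpha> s0 \<gamma> M c y \<noteq> m then zw (Zc \<alpha>) s0 (c m) y else 0)
      \<le> (\<Sum>m<M. F1 c m + (\<Sum>m'\<in>{..<M} - {m}. F2 c m m'))" for c
  proof (rule sum_mono)
    fix m assume m: "m \<in> {..<M}"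
    have "(\<Sum>y\<in>Ln n. if dcd \<alpha> s0 \<gamma> M c y \<noteq> m then zw (Zc \<alpha>) s0 (c m) y else 0)
        \<le> (\<Sum>y\<in>Ln n. (if tst \<alpha> s0 \<gamma> (c m) y then 0 else zw (Zc \<alpha>) s0 (c m) y) +
              (\<Sum>m'\<in>{..<M} - {m}. if tst \<alpha> s0 \<gamma> (c m') y then zw (Zc \<alpha>) s0 (c m) y else 0))"
      using m by (intro sum_mono ind_bound[OF a0 a1 M g] zw_nonneg[OF a0 a1]) auto
    also have "\<dots> = F1 c m + (\<Sum>y\<in>Ln n. \<Sum>m'\<in>{..<M} - {m}. if tst \<alpha> s0 \<gamma> (c m') y then zw (Zc \<alpha>) s0 (c m) y else 0)"
      by (simp add: sum.distrib F1_def)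
    also have "(\<Sum>y\<in>Ln n. \<Sum>m'\<in>{..<M} - {m}. if tst \<alpha> s0 \<gamma> (c m') y then zw (Zc \<alpha>) s0 (c m) y else 0)
       = (\<Sum>m'\<in>{..<M} - {m}. F2 c m m')" unfolding F2_def by (rule sum.swap)
    finally show "(\<Sum>y\<in>Ln n. if dcd \<alpha> s0 \<gamma> M c y \<noteq> m then zw (Zc \<alpha>) s0 (c m) y else 0)
      \<le> F1 c m + (\<Sum>m'\<in>{..<M} - {m}. F2 c m m')" .
  qed
  have "(\<Sum>c\<in>CB n M. cw \<alpha> M c * fb_err \<alpha> s0 n M (\<lambda>m. encf s0 (c m)) (dcd \<alpha> s0 \<gamma> M c))
      \<le> (\<Sum>c\<in>CB n M. cw \<alpha> M c * ((1 / M) * (\<Sum>m<M. F1 c m + (\<Sum>m'\<in>{..<M} - {m}. F2 c m m'))))"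
  proof (rule sum_mono)
    fix c assume c: "c \<in> CB n M"
    show "cw \<alpha> M c * fb_err \<alpha> s0 n M (\<lambda>m. encf s0 (c m)) (dcd \<alpha> s0 \<gamma> M c)
      \<le> cw \<alpha> M c * ((1 / M) * (\<Sum>m<M. F1 c m + (\<Sum>m'\<in>{..<M} - {m}. F2 c m m')))"
      unfolding err_eq[OF a0 a1 M g c]
      using stepA[of c] cw_nonneg[OF a0 a1 M g, of c] by (intro mult_left_mono) auto
  qed
  also have "\<dots> = (1 / M) * (\<Sum>m<M. (\<Sum>c\<in>CB n M. cw \<alpha> M c * F1 c m) + (\<Sum>m'\<in>{..<M} - {m}. \<Sum>c\<in>CB n M. cw \<alpha> M c * F2 c m m'))"
  proof -
    have "(\<Sum>c\<in>CB n M. cw \<alpha> M c * ((1 / M) * (\<Sum>m<M. F1 c m + (\<Sum>m'\<in>{..<M} - {m}. F2 c m m'))))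
      = (1 / M) * (\<Sum>c\<in>CB n M. \<Sum>m<M. cw \<alpha> M c * F1 c m + (\<Sum>m'\<in>{..<M} - {m}. cw \<alpha> M c * F2 c m m'))"
      by (simp add: sum_distrib_left distrib_left mult_ac)
    also have "(\<Sum>c\<in>CB n M. \<Sum>m<M. cw \<alpha> M c * F1 c m + (\<Sum>m'\<in>{..<M} - {m}. cw \<alpha> M c * F2 c m m'))
      = (\<Sum>m<M. \<Sum>c\<in>CB n M. cw \<alpha> M c * F1 c m + (\<Sum>m'\<in>{..<M} - {m}. cw \<alpha> M c * F2 c m m'))"
      by (rule sum.swap)
    also have "\<dots> = (\<Sum>m<M. (\<Sum>c\<in>CB n M. cw \<alpha> M c * F1 c m) + (\<Sum>c\<in>CB n M. \<Sum>m'\<in>{..<M} - {m}. cw \<alpha> M c * F2 c m m'))"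
      by (simp only: sum.distrib)
    also have "\<dots> = (\<Sum>m<M. (\<Sum>c\<in>CB n M. cw \<alpha> M c * F1 c m) + (\<Sum>m'\<in>{..<M} - {m}. \<Sum>c\<in>CB n M. cw \<alpha> M c * F2 c m m'))"
      by (intro sum.cong refl arg_cong2[where f = "(+)"] sum.swap)
    finally show ?thesis .
  qed
  also have "\<dots> \<le> (1 / M) * (\<Sum>m<M. Aterm \<alpha> s0 \<gamma> n + (\<Sum>m'\<in>{..<M} - {m}. 1 / \<gamma>))"
  proof (intro mult_left_mono sum_mono add_mono)
    fix m m' assume m: "m \<in> {..<M}" and m': "m' \<in> {..<M} - {m}"
    show "(\<Sum>c\<in>CB n M. cw \<alpha> M c * F2 c m m') \<le> 1 / \<gamma>"
      unfolding F2_def using m m' by (intro term2[OF a0 a1 M g]) auto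
  next
    fix m assume m: "m \<in> {..<M}"
    show "(\<Sum>c\<in>CB n M. cw \<alpha> M c * F1 c m) \<le> Aterm \<alpha> s0 \<gamma> n"
      unfolding F1_def using m term1[OF a0 a1 M g, of m] by simp
  qed simp
  also have "\<dots> \<le> (1 / M) * (\<Sum>m<M. Aterm \<alpha> s0 \<gamma> n + M / \<gamma>)"
  proof (intro mult_left_mono sum_mono add_left_mono)
    fix m assume m: "m \<in> {..<M}"
    have "card ({..<M} - {m}) \<le> M" by (simp add: card_Diff_singleton_if)
    then have "real (card ({..<M} - {m})) / \<gamma> \<le> M / \<gamma>" using g by (intro divide_right_mono) auto
    then show "(\<Sum>m'\<in>{..<M} - {m}. 1 / \<gamma>) \<le> M / \<gamma>" by simp
  qed simp
  also have "\<dots> = Aterm \<alpha> s0 \<gamma> n + M / \<gamma>" using M by simp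
  finally show ?thesis .
qed

lemma Aterm_bound:
  assumes t0: "0 \<le> t" and t1: "t \<le> 1 / BB \<alpha>"
  shows "Aterm \<alpha> s0 \<gamma> n \<le> exp (t * ln \<gamma>) * exp (n * (- t * ln (KK \<alpha>) + t^2 * BB \<alpha>))"
proof -
  define G where "G = exp (- t * ln (KK \<alpha>) + t^2 * BB \<alpha>)"
  have pt: "(if tst \<alpha> s0 \<gamma> u y then 0 else zw (Zc \<alpha>) s0 u y) \<le> exp (t * ln \<gamma>) * zw (zt \<alpha> (-t)) s0 u y"
    if l: "length u = length y" for u y
  proof -
    define P where "P = zw (Zc \<alpha>) s0 u y"
    define Q where "Q = Qn \<alpha> s0 y"
    have P0: "P \<ge> 0" unfolding P_def by (rule zw_nonneg[OF a0 a1])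
    have Q0: "Q > 0" unfolding Q_def by (rule Qn_pos[OF a0 a1])
    have T: "zw (zt \<alpha> (-t)) s0 u y = (if P = 0 then 0 else P * exp (- t * (ln P - ln Q)))"
      using zw_tilt[OF a0 a1 l, of "-t" s0] by (simp add: P_def Q_def Let_def)
    show ?thesis
    proof (cases "tst \<alpha> s0 \<gamma> u y \<or> P = 0")
      case True
      have "0 \<le> zw (zt \<alpha> (-t)) s0 u y" using T P0 by simp
      then show ?thesis using True T P_def by auto
    next
      case False
      then have Pp: "P > 0" and le: "P \<le> \<gamma> * Q" using P0 by (auto simp: tst_def P_def Q_def)
      have "ln P \<le> ln (\<gamma> * Q)" using Pp le by simp
      then have "ln P \<le> ln \<gamma> + ln Q" using g Q0 by (simp add: ln_mult)
      then have "0 \<le> t * (ln \<gamma> + ln Q - ln P)" using t0 by simp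
      then have ex: "0 \<le> t * ln \<gamma> + - t * (ln P - ln Q)" by (simp add: algebra_simps)
      have "P * 1 \<le> P * exp (t * ln \<gamma> + - t * (ln P - ln Q))" using Pp ex by (intro mult_left_mono) auto
      also have "\<dots> = exp (t * ln \<gamma>) * zw (zt \<alpha> (-t)) s0 u y" using Pp T by (simp add: exp_add[symmetric])
      finally show ?thesis using False P_def by simp
    qed
  qed
  have "Aterm \<alpha> s0 \<gamma> n \<le> (\<Sum>u\<in>Ln n. Pn \<alpha> u * (\<Sum>y\<in>Ln n. exp (t * ln \<gamma>) * zw (zt \<alpha> (-t)) s0 u y))"
    unfolding Aterm_def
    by (intro sum_mono mult_left_mono Pn_nonneg[OF a0 a1] pt) (auto simp: Ln_def)
  also have "\<dots> = exp (t * ln \<gamma>) * (\<Sum>u\<in>Ln n. \<Sum>y\<in>Ln n. Pn \<alpha> u * zw (zt \<alpha> (-t)) s0 u y)"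
    by (simp add: sum_distrib_left mult_ac)
  also have "(\<Sum>u\<in>Ln n. \<Sum>y\<in>Ln n. Pn \<alpha> u * zw (zt \<alpha> (-t)) s0 u y) = (\<Sum>b\<in>UNIV. \<Sum>v\<in>UNIV. pin \<alpha> b * zt \<alpha> (-t) v b) ^ n"
    by (rule joint[OF a0 a1])
  also have "\<dots> \<le> G ^ n"
  proof (rule power_mono)
    have "(\<Sum>b\<in>UNIV. \<Sum>v\<in>UNIV. pin \<alpha> b * zt \<alpha> (-t) v b) = (\<Sum>b\<in>UNIV. pin \<alpha> b * (\<Sum>v\<in>UNIV. zt \<alpha> (-t) v b))"
      by (simp add: sum_distrib_left)
    also have "\<dots> \<le> (\<Sum>b\<in>UNIV. pin \<alpha> b * G)"
      using single[OF a0 a1, of "-t"] t0 t1 pin_nonneg[OF a0 a1] by (intro sum_mono mult_left_mono) (auto simp: G_def)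
    also have "\<dots> = G" by (simp add: sum_distrib_right[symmetric] pin_sum[OF a0 a1])
    finally show "(\<Sum>b\<in>UNIV. \<Sum>v\<in>UNIV. pin \<alpha> b * zt \<alpha> (-t) v b) \<le> G" .
    show "0 \<le> (\<Sum>b\<in>UNIV. \<Sum>v\<in>UNIV. pin \<alpha> b * zt \<alpha> (-t) v b)"
      by (intro sum_nonneg mult_nonneg_nonneg pin_nonneg[OF a0 a1] zt_nonneg[OF a0 a1])
  qed
  finally have "Aterm \<alpha> s0 \<gamma> n \<le> exp (t * ln \<gamma>) * G ^ n" by (simp add: mult_left_mono)
  then show ?thesis by (simp add: G_def exp_of_nat_mult)
qed

end


lemma exp_small2: assumes c: "(c::real) > 0" and e: "e > 0" shows "\<exists>N. \<forall>n\<ge>N. exp (- (real n * c)) < e"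
proof -
  obtain N :: nat where N: "real N > 1 / (e * c)" using reals_Archimedean2 by blast
  have "exp (- (real n * c)) < e" if "n \<ge> N" for n
  proof -
    have "real N * c > 1 / (e * c) * c" using N c by (intro mult_strict_right_mono) auto
    then have "real N * c > 1 / e" using c by simp
    moreover have "real n * c \<ge> real N * c" using that c by (intro mult_right_mono) auto
    ultimately have "real n * c > 1 / e" by linarith
    then have "exp (real n * c) > 1 / e" using exp_ge_add_one_self[of "real n * c"] by linarith
    then have "1 / exp (real n * c) < 1 / (1 / e)" using e by (intro divide_strict_left_mono) auto
    then show ?thesis by (simp add: exp_minus inverse_eq_divide)
  qed
  then show ?thesis by blast
qed

lemma achievable:
  assumes a0: "0 \<le> \<alpha>" and a1: "\<alpha> < 1" and R0: "0 \<le> R" and RC: "R < log 2 (KK \<alpha>)"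
  shows "fb_achievable \<alpha> s0 R"
  unfolding fb_achievable_def
proof (intro conjI allI impI)
  show "0 \<le> R" by (rule R0)
  fix \<epsilon> :: real assume ep: "\<epsilon> > 0"
  define k where "k = ln (KK \<alpha>)"
  define r where "r = R * ln 2"
  have rk: "r < k" using RC by (simp add: r_def k_def log_def pos_less_divide_eq)
  have r0: "r \<ge> 0" using R0 by (simp add: r_def)
  define d where "d = (k - r) / 3"
  have d: "d > 0" using rk by (simp add: d_def)
  define B where "B = BB \<alpha>"
  have B1: "B \<ge> 1" using BB_ge1[OF a0 a1] by (simp add: B_def)
  define t where "t = min (1 / B) (d / (2 * B))"
  have t0: "t > 0" using B1 d by (simp add: t_def)
  have t1: "t \<le> 1 / BB \<alpha>" by (simp add: t_def B_def)
  have tB: "t * B \<le> d / 2" using B1 by (simp add: t_def min_def field_simps)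
  define c1 where "c1 = t * d / 2"
  have c1: "c1 > 0" using t0 d by (simp add: c1_def)
  have d2: "2 * d > 0" using d by simp
  obtain N1 where N1: "\<forall>n\<ge>N1. exp (- (real n * c1)) < \<epsilon> / 2" using exp_small2[OF c1] ep by (meson half_gt_zero)
  obtain N2 where N2: "\<forall>n\<ge>N2. exp (- (real n * (2 * d))) < \<epsilon> / 4" using exp_small2[OF d2] ep
    by (metis divide_pos_pos zero_less_numeral)
  show "\<exists>N. \<forall>n\<ge>N. \<exists>M enc dec. 2 powr (real n * R) \<le> real M \<and> fb_err \<alpha> s0 n M enc dec \<le> \<epsilon>"
  proof (rule exI[of _ "max N1 N2"], intro allI impI)
    fix n assume nN: "max N1 N2 \<le> n"
    define x where "x = 2 powr (real n * R)"
    have xe: "x = exp (real n * r)" by (simp add: x_def pow2_exp r_def mult.assoc)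
    have x1: "x \<ge> 1" using r0 by (simp add: xe)
    define M where "M = nat \<lceil>x\<rceil>"
    have Mx: "real M \<ge> x" by (simp add: M_def real_nat_ceiling_ge)
    have Mx2: "real M \<le> 2 * x"
    proof -
      have "real M = of_int \<lceil>x\<rceil>" using x1 by (simp add: M_def)
      also have "\<dots> \<le> x + 1" by simp
      finally show ?thesis using x1 by simp
    qed
    have Mpos: "M > 0" using Mx x1 by simp
    define \<gamma> where "\<gamma> = exp (real n * (k - d))"
    have g: "\<gamma> > 0" by (simp add: \<gamma>_def)
    note avg = avg_bound[OF a0 a1 Mpos g, of s0 n]
    note At = Aterm_bound[OF a0 a1 Mpos g less_imp_le[OF t0] t1, of s0 n]
    have e1: "exp (t * ln \<gamma>) * exp (real n * (- t * ln (KK \<alpha>) + t^2 * BB \<alpha>)) \<le> exp (- (real n * c1))"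
    proof -
      have "exp (t * ln \<gamma>) * exp (real n * (- t * ln (KK \<alpha>) + t^2 * BB \<alpha>)) = exp (t * (real n * (k - d)) + real n * (- t * k + t^2 * B))"
        by (simp add: \<gamma>_def exp_add k_def B_def)
      also have "t * (real n * (k - d)) + real n * (- t * k + t^2 * B) = real n * (- t * d + t * (t * B))"
        by (simp add: algebra_simps power2_eq_square)
      also have "exp (real n * (- t * d + t * (t * B))) \<le> exp (- (real n * c1))"
      proof -
        have "t * (t * B) \<le> t * (d / 2)" using tB t0 by (intro mult_left_mono) auto
        then have "- t * d + t * (t * B) \<le> - c1" by (simp add: c1_def field_simps)
        then have "real n * (- t * d + t * (t * B)) \<le> real n * (- c1)" by (intro mult_left_mono) auto
        then show ?thesis by simp
      qed
      finally show ?thesis .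
    qed
    have e2: "real M / \<gamma> \<le> 2 * exp (- (real n * (2 * d)))"
    proof -
      have "real M / \<gamma> \<le> 2 * x / \<gamma>" using Mx2 g by (intro divide_right_mono) auto
      also have "\<dots> = 2 * exp (real n * r - real n * (k - d))" by (simp add: xe \<gamma>_def exp_diff)
      also have "real n * r - real n * (k - d) = - (real n * (2 * d))" by (simp add: d_def field_simps)
      finally show ?thesis .
    qed
    have "(\<Sum>c\<in>CB n M. cw \<alpha> M c * fb_err \<alpha> s0 n M (\<lambda>m. encf s0 (c m)) (dcd \<alpha> s0 \<gamma> M c)) \<le> \<epsilon>"
    proof -
      have "exp (- (real n * c1)) < \<epsilon> / 2" using N1 nN by simp
      moreover have "exp (- (real n * (2 * d))) < \<epsilon> / 4" using N2 nN by simp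
      ultimately show ?thesis using avg At e1 e2 by linarith
    qed
    then have "\<exists>c\<in>CB n M. fb_err \<alpha> s0 n M (\<lambda>m. encf s0 (c m)) (dcd \<alpha> s0 \<gamma> M c) \<le> \<epsilon>"
    proof (intro exists_below_avg[where cw = "cw \<alpha> M"])
      show "finite (CB n M)" using CB_fin[OF a0 a1 Mpos g] by simp
      show "CB n M \<noteq> {}" using CB_ne[OF a0 a1 Mpos g] by simp
      show "(\<Sum>c\<in>CB n M. cw \<alpha> M c) = 1" using cw_sum[OF a0 a1 Mpos g] by simp
      show "0 \<le> cw \<alpha> M c" if "c \<in> CB n M" for c using cw_nonneg[OF a0 a1 Mpos g] by simp
    qed
    then obtain c where "c \<in> CB n M" and err: "fb_err \<alpha> s0 n M (\<lambda>m. encf s0 (c m)) (dcd \<alpha> s0 \<gamma> M c) \<le> \<epsilon>"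
      by blast
    then show "\<exists>M enc dec. 2 powr (real n * R) \<le> real M \<and> fb_err \<alpha> s0 n M enc dec \<le> \<epsilon>"
      using Mx x_def by blast
  qed
qed

theorem lemma2:
  fixes \<alpha> :: real and s0 :: bool
  assumes "0 \<le> \<alpha>" and "\<alpha> < 1"
  shows "fb_capacity \<alpha> s0 =
    - log 2 (1 / (1 + (1 - \<alpha>) * pw \<alpha> (\<alpha> / (1 - \<alpha>))))"
proof -
  note a0 = assms(1) and a1 = assms(2)
  define C where "C = log 2 (KK \<alpha>)"
  have K: "KK \<alpha> > 1" by (rule KK_gt1[OF a0 a1])
  have C0: "C > 0" using K by (simp add: C_def)
  have rhs: "- log 2 (1 / (1 + (1 - \<alpha>) * pw \<alpha> (\<alpha> / (1 - \<alpha>)))) = C"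
  proof -
    have "1 + (1 - \<alpha>) * pw \<alpha> (\<alpha> / (1 - \<alpha>)) = KK \<alpha>" by (simp add: KK_def aa_def)
    then show ?thesis using K by (simp add: C_def log_divide)
  qed
  have "Sup {R. fb_achievable \<alpha> s0 R} = C"
  proof (rule cSup_eq_non_empty)
    show "{R. fb_achievable \<alpha> s0 R} \<noteq> {}" using achievable[OF a0 a1, of 0 s0] C0 C_def by auto
    show "\<And>x. x \<in> {R. fb_achievable \<alpha> s0 R} \<Longrightarrow> x \<le> C" using converse[OF a0 a1] C_def by auto
    fix y assume ub: "\<And>x. x \<in> {R. fb_achievable \<alpha> s0 R} \<Longrightarrow> x \<le> y"
    show "C \<le> y"
    proof (rule ccontr)
      assume "\<not> C \<le> y"
      define R where "R = (max y 0 + C) / 2"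
      have "fb_achievable \<alpha> s0 R" using \<open>\<not> C \<le> y\<close> C0
        by (intro achievable[OF a0 a1]) (auto simp: R_def C_def[symmetric])
      then have "R \<le> y" using ub by simp
      then show False using \<open>\<not> C \<le> y\<close> C0 by (simp add: R_def)
    qed
  qed
  then show ?thesis unfolding fb_capacity_def rhs .
qed


end
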